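(* Let $\tau>1$, $\gamma>0$, $\alpha\in D_{\gamma,\tau}$ with partial quotients $a_1,a_2,\dots$ and convergents $p_n/q_n$. Then for every even $n\ge0$: $$\frac{p_n}{q_n}+\frac{\gamma}{q_n^{\tau+1}}<\frac{p_{n+2}}{q_{n+2}}-\frac{\gamma}{q_{n+2}^{\tau+1}}$$ holds if and only if $$a_{n+2}>\frac{q_n}{\gamma q_{n+1}}\cdot\frac{1}{\left(\frac{1}{\gamma}-\frac{q_{n+1}}{q_n^{\tau}}\right)-\frac{q_nq_{n+1}}{q_{n+2}^{\tau+1}}}-\frac{q_n}{q_{n+1}}.$$
   Context: For $x\in\mathbb{R}$, $\|x\|:=\min_{p\in\mathbb{Z}}|x-p|$; $\mathbb{N}=\{1,2,\dots\}$. For $\gamma>0,\tau\ge1$, $D_{\gamma,\tau}:=\{\alpha\in(0,1): \|q\alpha\|\ge\gamma/q^\tau\ \forall q\in\mathbb{N}\}$; its elements are irrational. For irrational $\alpha\in(0,1)$ write $\alpha=\cfrac{1}{a_1+\cfrac{1}{a_2+\cdots}}$ (partial quotients $a_n\in\mathbb{N}$), and let $p_n/q_n$ ($n\ge0$) be its convergents: $p_{-1}=1,q_{-1}=0,p_0=0,q_0=1$, $p_n=a_np_{n-1}+p_{n-2}$, $q_n=a_nq_{n-1}+q_{n-2}$. *)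

theory Defs
  imports Complex_Main
begin

definition dist_int :: "real \<Rightarrow> real" where
  "dist_int x = (INF p::int. \<bar>x - of_int p\<bar>)"

definition Dioph :: "real \<Rightarrow> real \<Rightarrow> real set" where
  "Dioph \<gamma> \<tau> = {\<alpha>. 0 < \<alpha> \<and> \<alpha> < 1 \<and>
      (\<forall>q::nat. q \<ge> 1 \<longrightarrow> dist_int (real q * \<alpha>) \<ge> \<gamma> / real q powr \<tau>)}"

fun cf_rem :: "real \<Rightarrow> nat \<Rightarrow> real" where
  "cf_rem \<alpha> 0 = \<alpha>"
| "cf_rem \<alpha> (Suc k) = frac (1 / cf_rem \<alpha> k)"

text \<open>Partial quotients: cf_a alpha n = a_n for n >= 1, a_n = floor(1/x_(n-1)).\<close>
definition cf_a :: "real \<Rightarrow> nat \<Rightarrow> int" where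
  "cf_a \<alpha> n = \<lfloor>1 / cf_rem \<alpha> (n - 1)\<rfloor>"

text \<open>Shifted convergent recursions: cf_P alpha k = p_(k-1), cf_Q alpha k = q_(k-1).\<close>
fun cf_P :: "real \<Rightarrow> nat \<Rightarrow> int" where
  "cf_P \<alpha> 0 = 1"
| "cf_P \<alpha> (Suc 0) = 0"
| "cf_P \<alpha> (Suc (Suc k)) = cf_a \<alpha> (Suc k) * cf_P \<alpha> (Suc k) + cf_P \<alpha> k"

fun cf_Q :: "real \<Rightarrow> nat \<Rightarrow> int" where
  "cf_Q \<alpha> 0 = 0"
| "cf_Q \<alpha> (Suc 0) = 1"
| "cf_Q \<alpha> (Suc (Suc k)) = cf_a \<alpha> (Suc k) * cf_Q \<alpha> (Suc k) + cf_Q \<alpha> k"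

definition cf_p :: "real \<Rightarrow> nat \<Rightarrow> int" where
  "cf_p \<alpha> n = cf_P \<alpha> (Suc n)"

definition cf_q :: "real \<Rightarrow> nat \<Rightarrow> int" where
  "cf_q \<alpha> n = cf_Q \<alpha> (Suc n)"

end

theory Submission
  imports Defs
begin
lemma alg:
  fixes q0 q1 q2 a g A B :: real
  assumes q0: "q0>0" and q1: "q1>0" and g: "g>0" and A: "A>0" and B: "B>0"
    and q2: "q2 = a*q1+q0" and a: "a \<ge> 1"
    and D: "1/g - q1/A - q0*q1/B > 0"
  shows "(a/(q0*q2) > g/(q0*A) + g/B) \<longleftrightarrow> (a > q0/(g*q1) * (1/(1/g - q1/A - q0*q1/B)) - q0/q1)"
proof -
  define D where "D = 1/g - q1/A - q0*q1/B"
  have Dp: "D > 0" using D D_def by simp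
  have q2p: "q2 > 0" using q2 a q0 q1 by (simp add: add_pos_pos)
  have L: "(a/(q0*q2) > g/(q0*A) + g/B) \<longleftrightarrow> a > g*q2/A + g*q0*q2/B"
  proof -
    have "(a/(q0*q2) > g/(q0*A) + g/B) \<longleftrightarrow> a > (g/(q0*A) + g/B) * (q0*q2)"
      using q0 q2p pos_less_divide_eq[of "q0*q2" "g/(q0*A) + g/B" a] by simp
    also have "(g/(q0*A) + g/B) * (q0*q2) = g*q2/A + g*q0*q2/B" using q0 q2p A B by (simp add: field_simps)
    finally show ?thesis .
  qed
  have R: "(a > q0/(g*q1) * (1/D) - q0/q1) \<longleftrightarrow> q2*g*D > q0"
  proof -
    have gqD: "g*q1*D > 0" using q1 g Dp by simp
    have "(a > q0/(g*q1) * (1/D) - q0/q1) \<longleftrightarrow> q0/(g*q1*D) < a + q0/q1" by auto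
    also have "\<dots> \<longleftrightarrow> q0 < (a + q0/q1) * (g*q1*D)" using pos_divide_less_eq[OF gqD] by simp
    also have "(a + q0/q1) * (g*q1*D) = q2*g*D" using q1 q2 by (simp add: field_simps)
    finally show ?thesis .
  qed
  have "q2*g*D = q2 - g*q1*q2/A - g*q0*q1*q2/B" using g unfolding D_def by (simp add: field_simps)
  hence R2: "q2*g*D > q0 \<longleftrightarrow> a*q1 > q1*(g*q2/A + g*q0*q2/B)" using q2 by (auto simp: algebra_simps)
  have "a*q1 > q1*(g*q2/A + g*q0*q2/B) \<longleftrightarrow> a > g*q2/A + g*q0*q2/B" using q1
    by (metis mult.commute mult_less_cancel_left_pos)
  thus ?thesis using L R R2 D_def by simp
qed
lemma rem_props:
  assumes "\<alpha> \<notin> \<rat>" "0 < \<alpha>" "\<alpha> < 1"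
  shows "cf_rem \<alpha> k \<notin> \<rat> \<and> 0 < cf_rem \<alpha> k \<and> cf_rem \<alpha> k < 1"
proof (induction k)
  case 0 then show ?case using assms by simp
next
  case (Suc k)
  define x where "x = cf_rem \<alpha> k"
  have x: "x \<notin> \<rat>" "0 < x" "x < 1" using Suc x_def by auto
  have i: "1/x \<notin> \<rat>"
  proof
    assume "1/x \<in> \<rat>"
    hence "1/(1/x) \<in> \<rat>" by (rule Rats_divide[OF Rats_1])
    thus False using x by simp
  qed
  have f: "frac (1/x) = 1/x - of_int \<lfloor>1/x\<rfloor>" by (simp add: frac_def)
  have fi: "frac (1/x) \<notin> \<rat>"
  proof
    assume "frac (1/x) \<in> \<rat>"
    hence "frac (1/x) + of_int \<lfloor>1/x\<rfloor> \<in> \<rat>" by (simp add: Rats_add)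
    thus False using i f by simp
  qed
  have "frac (1/x) \<noteq> 0" using fi by (metis Rats_0)
  moreover have "frac (1/x) \<ge> 0" "frac (1/x) < 1" by (auto simp: frac_lt_1)
  ultimately show ?case using fi x_def by simp
qed

lemma a_ge1:
  assumes "\<alpha> \<notin> \<rat>" "0 < \<alpha>" "\<alpha> < 1"
  shows "cf_a \<alpha> (Suc k) \<ge> 1"
proof -
  have x: "0 < cf_rem \<alpha> k" "cf_rem \<alpha> k < 1" using rem_props[OF assms] by auto
  hence "1 / cf_rem \<alpha> k \<ge> 1" by simp
  thus ?thesis unfolding cf_a_def by simp
qed

lemma recip:
  "1 / cf_rem \<alpha> k = of_int (cf_a \<alpha> (Suc k)) + cf_rem \<alpha> (Suc k)"
  unfolding cf_a_def by (simp add: frac_def)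

lemma Q_props:
  assumes "\<alpha> \<notin> \<rat>" "0 < \<alpha>" "\<alpha> < 1"
  shows "cf_Q \<alpha> (Suc k) \<ge> 1 \<and> cf_Q \<alpha> (Suc k) \<ge> cf_Q \<alpha> k \<and> cf_Q \<alpha> k \<ge> 0"
proof (induction k)
  case 0 then show ?case by simp
next
  case (Suc k)
  have a: "cf_a \<alpha> (Suc k) \<ge> 1" by (rule a_ge1[OF assms])
  have e: "cf_Q \<alpha> (Suc (Suc k)) = cf_a \<alpha> (Suc k) * cf_Q \<alpha> (Suc k) + cf_Q \<alpha> k" by simp
  have m:  "cf_a \<alpha> (Suc k) * cf_Q \<alpha> (Suc k) \<ge> cf_Q \<alpha> (Suc k)"
    using a Suc by (metis mult_le_cancel_right1 order.trans zero_le_one not_le)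
  show ?case unfolding e using m Suc by linarith
qed

lemma Q_nonneg:
  assumes "\<alpha> \<notin> \<rat>" "0 < \<alpha>" "\<alpha> < 1"
  shows "cf_Q \<alpha> k \<ge> 0"
  using Q_props[OF assms] by blast

lemma det: "cf_P \<alpha> (Suc k) * cf_Q \<alpha> k - cf_P \<alpha> k * cf_Q \<alpha> (Suc k) = (-1)^(Suc k)"
proof (induction k)
  case 0 then show ?case by simp
next
  case (Suc k)
  have "cf_P \<alpha> (Suc (Suc k)) * cf_Q \<alpha> (Suc k) - cf_P \<alpha> (Suc k) * cf_Q \<alpha> (Suc (Suc k))
      = - (cf_P \<alpha> (Suc k) * cf_Q \<alpha> k - cf_P \<alpha> k * cf_Q \<alpha> (Suc k))"
    by (simp add: algebra_simps)
  then show ?case using Suc by simp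
qed

lemma frac_helper:
  fixes A B C D u :: real
  assumes "u \<noteq> 0"
  shows "(A + B * (1/u)) / (C + D * (1/u)) = (A*u + B) / (C*u + D)"
proof -
  have 1: "A + B * (1/u) = (A*u+B)/u" using assms by (simp add: field_simps)
  have 2: "C + D * (1/u) = (C*u+D)/u" using assms by (simp add: field_simps)
  show ?thesis unfolding 1 2 using assms by simp
qed

lemma ident:
  assumes "\<alpha> \<notin> \<rat>" "0 < \<alpha>" "\<alpha> < 1"
  shows "\<alpha> = (cf_P \<alpha> (Suc k) + cf_P \<alpha> k * cf_rem \<alpha> k) / (cf_Q \<alpha> (Suc k) + cf_Q \<alpha> k * cf_rem \<alpha> k)"
proof (induction k)
  case 0 then show ?case by simp
next
  case (Suc k)
  define x where "x = cf_rem \<alpha> k"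
  define y where "y = cf_rem \<alpha> (Suc k)"
  define a where "a = real_of_int (cf_a \<alpha> (Suc k))"
  have x: "0 < x" using rem_props[OF assms, of k] unfolding x_def by blast
  have y: "0 < y" using rem_props[OF assms, of "Suc k"] unfolding y_def by blast
  have a: "a \<ge> 1" using a_ge1[OF assms] a_def by simp
  have rx: "1/x = a+y" using recip[of \<alpha> k] unfolding x_def y_def a_def by simp
  have xr: "x = 1/(a+y)" unfolding rx[symmetric] by simp
  have q1: "real_of_int (cf_Q \<alpha> (Suc k)) \<ge> 1" using Q_props[OF assms] by simp
  have q0: "real_of_int (cf_Q \<alpha> k) \<ge> 0" using Q_nonneg[OF assms] by simp
  have ay: "a + y > 0" using a y by simp
  have "\<alpha> = (cf_P \<alpha> (Suc k) + cf_P \<alpha> k * x) / (cf_Q \<alpha> (Suc k) + cf_Q \<alpha> k * x)"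
    using Suc x_def by simp
  also have "\<dots> = (cf_P \<alpha> (Suc k) * (a+y) + cf_P \<alpha> k) / (cf_Q \<alpha> (Suc k) * (a+y) + cf_Q \<alpha> k)"
    unfolding xr using ay by (intro frac_helper) simp
  also have "\<dots> = (cf_P \<alpha> (Suc (Suc k)) + cf_P \<alpha> (Suc k) * y) / (cf_Q \<alpha> (Suc (Suc k)) + cf_Q \<alpha> (Suc k) * y)"
    by (simp add: a_def algebra_simps)
  finally show ?case using y_def by simp
qed

lemma dist_le: "dist_int x \<le> \<bar>x - of_int p\<bar>"
  unfolding dist_int_def by (rule cInf_lower) (auto intro: bdd_belowI[of _ 0])

lemma Dioph_D:
  assumes "\<alpha> \<in> Dioph \<gamma> \<tau>" "(q::nat) \<ge> 1"
  shows "dist_int (real q * \<alpha>) \<ge> \<gamma> / real q powr \<tau>"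
proof -
  have "0 < \<alpha> \<and> \<alpha> < 1 \<and> (\<forall>q::nat. q \<ge> 1 \<longrightarrow> dist_int (real q * \<alpha>) \<ge> \<gamma> / real q powr \<tau>)"
    using assms(1) unfolding Dioph_def by (rule CollectD)
  thus ?thesis using assms(2) by blast
qed

lemma Dioph_01:
  assumes "\<alpha> \<in> Dioph \<gamma> \<tau>"
  shows "0 < \<alpha>" "\<alpha> < 1"
proof -
  have "0 < \<alpha> \<and> \<alpha> < 1 \<and> (\<forall>q::nat. q \<ge> 1 \<longrightarrow> dist_int (real q * \<alpha>) \<ge> \<gamma> / real q powr \<tau>)"
    using assms(1) unfolding Dioph_def by (rule CollectD)
  thus "0 < \<alpha>" "\<alpha> < 1" by blast+
qed

lemma dioph_irr:
  assumes "\<gamma> > 0" "\<alpha> \<in> Dioph \<gamma> \<tau>"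
  shows "\<alpha> \<notin> \<rat>"
proof
  assume "\<alpha> \<in> \<rat>"
  then obtain r s where s: "s > 0" and rs: "\<alpha> = of_int r / of_int s" by (rule Rats_cases') blast
  have s1: "nat s \<ge> 1" using s by simp
  have 1: "dist_int (real (nat s) * \<alpha>) \<ge> \<gamma> / real (nat s) powr \<tau>"
    by (rule Dioph_D[OF assms(2) s1])
  have rs2: "real (nat s) = of_int s" using s by simp
  have 2: "real (nat s) * \<alpha> = of_int r" unfolding rs2 rs using s by simp
  have 3: "dist_int (real (nat s) * \<alpha>) \<le> 0" unfolding 2 using dist_le[of "of_int r" r] by simp
  have 4: "\<gamma> / real (nat s) powr \<tau> > 0" using assms(1) s1 by simp
  show False using 1 3 4 by linarith
qed

theorem lemma4:
  fixes \<tau> \<gamma> \<alpha> :: real and n :: nat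
  assumes "\<tau> > 1" and "\<gamma> > 0" and "\<alpha> \<in> Dioph \<gamma> \<tau>" and "even n"
  shows "(cf_p \<alpha> n / cf_q \<alpha> n + \<gamma> / real_of_int (cf_q \<alpha> n) powr (\<tau> + 1)
            < cf_p \<alpha> (n+2) / cf_q \<alpha> (n+2) - \<gamma> / real_of_int (cf_q \<alpha> (n+2)) powr (\<tau> + 1))
     \<longleftrightarrow>
     (real_of_int (cf_a \<alpha> (n+2)) >
        real_of_int (cf_q \<alpha> n) / (\<gamma> * cf_q \<alpha> (n+1)) *
          (1 / ((1 / \<gamma> - cf_q \<alpha> (n+1) / real_of_int (cf_q \<alpha> n) powr \<tau>)
                - cf_q \<alpha> n * cf_q \<alpha> (n+1) / real_of_int (cf_q \<alpha> (n+2)) powr (\<tau> + 1)))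
        - real_of_int (cf_q \<alpha> n) / cf_q \<alpha> (n+1))"
proof -
  have a01: "0 < \<alpha>" "\<alpha> < 1" using Dioph_01[OF assms(3)] by auto
  have irr: "\<alpha> \<notin> \<rat>" using dioph_irr assms(2,3) by blast
  note H = irr a01
  define q0 where "q0 = real_of_int (cf_q \<alpha> n)"
  define q1 where "q1 = real_of_int (cf_q \<alpha> (n+1))"
  define q2 where "q2 = real_of_int (cf_q \<alpha> (n+2))"
  define p0 where "p0 = real_of_int (cf_p \<alpha> n)"
  define p1 where "p1 = real_of_int (cf_p \<alpha> (n+1))"
  define p2 where "p2 = real_of_int (cf_p \<alpha> (n+2))"
  define a where "a = real_of_int (cf_a \<alpha> (n+2))"
  define x where "x = cf_rem \<alpha> (Suc n)"
  define x' where "x' = cf_rem \<alpha> (Suc (Suc n))"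
  define A where "A = q0 powr \<tau>"
  define B where "B = q2 powr (\<tau>+1)"
  have Q1: "cf_Q \<alpha> (Suc n) \<ge> 1" "cf_Q \<alpha> (Suc (Suc n)) \<ge> cf_Q \<alpha> (Suc n)"
    using Q_props[OF H, of n] Q_props[OF H, of "Suc n"] by auto
  have q0: "q0 \<ge> 1" using Q1 unfolding q0_def cf_q_def by simp
  have q1: "q1 \<ge> q0"
  proof -
    have "real_of_int (cf_Q \<alpha> (Suc (Suc n))) \<ge> real_of_int (cf_Q \<alpha> (Suc n))" using Q1(2) by (simp only: of_int_le_iff)
    moreover have "q1 = real_of_int (cf_Q \<alpha> (Suc (Suc n)))" unfolding q1_def cf_q_def by simp
    moreover have "q0 = real_of_int (cf_Q \<alpha> (Suc n))" unfolding q0_def cf_q_def by simp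
    ultimately show ?thesis by simp
  qed
  have a: "a \<ge> 1" using a_ge1[OF H, of "Suc n"] unfolding a_def by (simp add: numeral_2_eq_2)
  have q2: "q2 = a*q1 + q0" unfolding q2_def a_def q1_def q0_def cf_q_def by (simp add: numeral_2_eq_2)
  have p2: "p2 = a*p1 + p0" unfolding p2_def a_def p1_def p0_def cf_p_def by (simp add: numeral_2_eq_2)
  have dt: "p1*q0 - p0*q1 = 1"
  proof -
    have "cf_P \<alpha> (Suc (Suc n)) * cf_Q \<alpha> (Suc n) - cf_P \<alpha> (Suc n) * cf_Q \<alpha> (Suc (Suc n)) = 1"
      using det[of \<alpha> "Suc n"] assms(4) by simp
    hence "real_of_int (cf_P \<alpha> (Suc (Suc n)) * cf_Q \<alpha> (Suc n) - cf_P \<alpha> (Suc n) * cf_Q \<alpha> (Suc (Suc n))) = 1"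
      by simp
    thus ?thesis unfolding p1_def q0_def p0_def q1_def cf_p_def cf_q_def by simp
  qed
  have xx: "0 < x" "x < 1" "0 < x'" "x' < 1"
    using rem_props[OF H, of "Suc n"] rem_props[OF H, of "Suc (Suc n)"] unfolding x_def x'_def by auto
  have rx: "1/x = a + x'" using recip[of \<alpha> "Suc n"] unfolding x_def x'_def a_def
    by (simp add: numeral_2_eq_2)
  have xr: "x = 1/(a+x')" unfolding rx[symmetric] by simp
  have id: "\<alpha> = (p1 + p0*x)/(q1 + q0*x)" using ident[OF H, of "Suc n"]
    unfolding p1_def p0_def q1_def q0_def x_def cf_p_def cf_q_def by simp
  have den: "q1 + q0*x > 0" using q0 q1 xx by (simp add: add_pos_nonneg)
  have E2: "q0*\<alpha> - p0 = 1/(q1 + q0*x)"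
  proof -
    have ax: "\<alpha>*(q1 + q0*x) = p1+p0*x" using id den by (simp add: field_simps)
    have "(q0*\<alpha> - p0)*(q1 + q0*x) = q0*(\<alpha>*(q1 + q0*x)) - p0*(q1+q0*x)" by (simp add: algebra_simps)
    also have "\<dots> = q0*(p1+p0*x) - p0*(q1+q0*x)" unfolding ax ..
    also have "\<dots> = 1" using dt by (simp add: algebra_simps)
    finally show ?thesis using den by (simp add: field_simps)
  qed
  have aq1: "a*q1 \<ge> q1" using a q0 q1 by (simp add: mult_right_mono[of 1 a q1, simplified])
  have aq0: "a*q1 \<ge> a*q0" using a q1 by (intro mult_left_mono) auto
  have q2p: "q2 > 0" using q2 aq1 q0 q1 by linarith
  have E1: "p2/q2 - p0/q0 = a/(q0*q2)"
  proof -
    have "p2*q0 - p0*q2 = a*(p1*q0 - p0*q1)" unfolding p2 q2 by (simp add: algebra_simps)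
    hence "p2*q0 - p0*q2 = a" using dt by simp
    thus ?thesis using q0 q2p by (simp add: field_simps)
  qed
  have Ap: "A > 0" using q0 unfolding A_def by simp
  have Bp: "B > 0" using q2p unfolding B_def by simp
  have dio: "dist_int (real (nat (cf_q \<alpha> n)) * \<alpha>) \<ge> \<gamma> / real (nat (cf_q \<alpha> n)) powr \<tau>"
  proof -
    have "nat (cf_q \<alpha> n) \<ge> 1" using q0 unfolding q0_def by simp
    thus ?thesis by (rule Dioph_D[OF assms(3)])
  qed
  have "real (nat (cf_q \<alpha> n)) = q0" using q0 unfolding q0_def by simp
  hence "\<gamma> / A \<le> dist_int (q0 * \<alpha>)" using dio unfolding A_def by simp
  also have "\<dots> \<le> \<bar>q0*\<alpha> - p0\<bar>" unfolding p0_def by (rule dist_le)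
  also have "\<dots> = 1/(q1 + q0*x)" using E2 den by simp
  finally have gA: "\<gamma> / A \<le> 1/(q1 + q0*x)" .
  have ig: "1/\<gamma> \<ge> (q1 + q0*x)/A"
    using gA den Ap assms(2) by (simp add: field_simps)
  have key: "x*q2^2 > q1*q0"
  proof -
    have "q2/(a+x') > q2/(a+1)" using xx a q2p by (intro divide_strict_left_mono) auto
    moreover have "q2/(a+1) \<ge> q0" using q2 aq0 a by (simp add: field_simps)
    ultimately have "x*q2 > q0" unfolding xr by simp
    moreover have "q2 > q1" using q2 aq1 q0 by linarith
    ultimately have "(x*q2)*q2 > q0*q1" using q0 q1 by (intro mult_strict_mono) auto
    thus ?thesis by (simp add: power2_eq_square algebra_simps)
  qed
  have Bs: "B = q2^2 * q2 powr (\<tau>-1)"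
  proof -
    have e: "\<tau>+1 = 2 + (\<tau>-1)" by simp
    have "B = q2 powr 2 * q2 powr (\<tau>-1)" unfolding B_def e by (rule powr_add)
    moreover have "q2 powr 2 = q2^2" using q2p by simp
    ultimately show ?thesis by simp
  qed
  have As: "A = q0 * q0 powr (\<tau>-1)"
  proof -
    have e: "\<tau> = 1 + (\<tau>-1)" by simp
    have "A = q0 powr 1 * q0 powr (\<tau>-1)" unfolding A_def by (subst e) (rule powr_add)
    moreover have "q0 powr 1 = q0" using q0 by simp
    ultimately show ?thesis by simp
  qed
  have mono: "q2 powr (\<tau>-1) \<ge> q0 powr (\<tau>-1)"
    using assms(1) q0 q1 q2 aq1 by (intro powr_mono2) auto
  have C0: "q0 powr (\<tau>-1) > 0" using q0 by simp
  have xB: "x*B > q1*A"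
  proof -
    have "q1*A = (q1*q0) * q0 powr (\<tau>-1)" unfolding As by (simp add: algebra_simps)
    also have "\<dots> \<le> (q1*q0) * q2 powr (\<tau>-1)" using mono q0 q1 by (intro mult_left_mono) auto
    also have "\<dots> < (x*q2^2) * q2 powr (\<tau>-1)" using key C0 mono by (intro mult_strict_right_mono) auto
    also have "\<dots> = x*B" unfolding Bs by simp
    finally show ?thesis .
  qed
  have Dpos: "1/\<gamma> - q1/A - q0*q1/B > 0"
  proof -
    have "q0*x/A > q0*q1/B" using xB Ap Bp q0 by (simp add: field_simps)
    moreover have "1/\<gamma> - q1/A \<ge> q0*x/A" using ig by (simp add: add_divide_distrib)
    ultimately show ?thesis by simp
  qed
  have q0A: "q0 powr (\<tau>+1) = q0*A"
  proof -
    have "q0 powr (\<tau>+1) = q0 powr \<tau> * q0 powr 1" by (rule powr_add)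
    moreover have "q0 powr 1 = q0" using q0 by simp
    ultimately show ?thesis unfolding A_def by simp
  qed
  have L: "(p0/q0 + \<gamma>/q0 powr (\<tau>+1) < p2/q2 - \<gamma>/B) \<longleftrightarrow> (a/(q0*q2) > \<gamma>/(q0*A) + \<gamma>/B)"
    unfolding q0A using E1 by linarith
  have R: "(a/(q0*q2) > \<gamma>/(q0*A) + \<gamma>/B) \<longleftrightarrow> (a > q0/(\<gamma>*q1) * (1/(1/\<gamma> - q1/A - q0*q1/B)) - q0/q1)"
    using q0 q1 assms(2) Ap Bp q2 a Dpos by (intro alg) auto
  have G: "(p0/q0 + \<gamma>/q0 powr (\<tau>+1) < p2/q2 - \<gamma>/B) \<longleftrightarrow> (a > q0/(\<gamma>*q1) * (1/((1/\<gamma> - q1/A) - q0*q1/B)) - q0/q1)"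
    using trans[OF L R] .
  show ?thesis using G unfolding q0_def q1_def q2_def p0_def p2_def a_def A_def B_def of_int_mult .
qed

end
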